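(* Let $n\ge 1$ be an integer and $0<\gamma<1$. Then no root $\lambda$ of $D_a(\lambda)=\lambda^{2n-1}(\lambda-\gamma)^2-(1-\gamma)^2$ satisfies $|\lambda|>1$. *)

theory Defs
  imports "HOL-Analysis.Analysis"
begin

end

theory Submission
  imports Defs
begin

theorem proposition2:
  fixes n :: nat and g :: real and z :: complex
  assumes "n \<ge> 1" and "0 < g" and "g < 1"
    and "z ^ (2*n - 1) * (z - of_real g)^2 - (of_real (1 - g))^2 = 0"
  shows "\<not> (norm z > 1)"
proof
  assume h: "norm z > 1"
  define m where "m = 2*n - 1"
  have eq: "z ^ m * (z - of_real g)^2 = (of_real (1 - g))^2"
    using assms(4) unfolding m_def by simp
  have "norm (z ^ m * (z - of_real g)^2) = norm z ^ m * norm (z - of_real g) ^ 2"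
    by (simp add: norm_mult norm_power)
  also have "norm ((of_real (1 - g) :: complex)^2) = (1-g)^2"
    using assms(3) by (simp only: norm_power norm_of_real)
  ultimately have e2: "norm z ^ m * norm (z - of_real g) ^ 2 = (1-g)^2"
    using eq by simp
  have "norm (z - of_real g) \<ge> norm z - norm (of_real g :: complex)"
    by (rule norm_triangle_ineq2)
  hence a: "norm (z - of_real g) > 1 - g" using h assms(2) by simp
  have b: "norm z ^ m \<ge> 1" using h by (simp add: one_le_power)
  have c: "norm (z - of_real g) ^ 2 > (1-g)^2"
    using a assms(3) by (simp add: power_strict_mono)
  have "(1-g)^2 < norm z ^ m * norm (z - of_real g) ^ 2"
    using b c by (smt (verit) mult_le_cancel_right1 zero_le_power2)
  thus False using e2 by simp
qed

end
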